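(* Let $p_1,p_3,\beta,q_0,q_1\in\mathbb{R}$ with either $p_3=0$ or $\beta=1$, and let $q_2=5(q_1-3q_0)$. Then there is a polynomial $F$ in $u,u_x,\dots,u_{4x}$ such that for every smooth solution $u(x,t)$ of $$u_t=p_1(u^2)_x+p_3(uu_{xx}+\beta u_x^2)_x+q_0uu_{5x}+q_1u_xu_{4x}+q_2u_{2x}u_{3x}$$ one has $\partial_t(u^3)=\partial_x\big(F(u,u_x,\dots,u_{4x})\big)$. Consequently, for solutions decaying rapidly at $x\to\pm\infty$ together with their derivatives, $\int_{-\infty}^{\infty}u^3\,dx$ is independent of $t$.
   Context: Subscripts denote partial derivatives, $u_{kx}=\partial_x^k u$. *)

theory Defs
  imports "HOL-Analysis.Analysis"
begin

definition dx :: "(real \<Rightarrow> real \<Rightarrow> real) \<Rightarrow> nat \<Rightarrow> real \<Rightarrow> real \<Rightarrow> real" where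
  "dx u k x t = (deriv ^^ k) (\<lambda>y. u y t) x"

definition dt :: "(real \<Rightarrow> real \<Rightarrow> real) \<Rightarrow> real \<Rightarrow> real \<Rightarrow> real" where
  "dt u x t = deriv (\<lambda>s. u x s) t"

text \<open>Smooth (C-infinity) functions of (x,t) on the whole plane: continuous, both
  first partial derivatives exist everywhere, and are again smooth.\<close>
coinductive smooth2 :: "(real \<Rightarrow> real \<Rightarrow> real) \<Rightarrow> bool" where
  "\<lbrakk> continuous_on UNIV (\<lambda>z. f (fst z) (snd z));
     \<forall>x t. (\<lambda>y. f y t) differentiable (at x);
     \<forall>x t. (\<lambda>s. f x s) differentiable (at t);
     smooth2 (\<lambda>x t. deriv (\<lambda>y. f y t) x);
     smooth2 (\<lambda>x t. deriv (\<lambda>s. f x s) t) \<rbrakk> \<Longrightarrow> smooth2 f"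

definition poly5 :: "(real \<Rightarrow> real \<Rightarrow> real \<Rightarrow> real \<Rightarrow> real \<Rightarrow> real) \<Rightarrow> bool" where
  "poly5 F \<longleftrightarrow> (\<exists>c :: nat \<times> nat \<times> nat \<times> nat \<times> nat \<Rightarrow> real.
     finite {m. c m \<noteq> 0} \<and>
     (\<forall>v0 v1 v2 v3 v4. F v0 v1 v2 v3 v4 =
        (\<Sum>(a0, a1, a2, a3, a4) \<in> {m. c m \<noteq> 0}.
           c (a0, a1, a2, a3, a4) * v0 ^ a0 * v1 ^ a1 * v2 ^ a2 * v3 ^ a3 * v4 ^ a4)))"

definition solves_eq :: "real \<Rightarrow> real \<Rightarrow> real \<Rightarrow> real \<Rightarrow> real \<Rightarrow> real \<Rightarrow> (real \<Rightarrow> real \<Rightarrow> real) \<Rightarrow> bool" where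
  "solves_eq p1 p3 \<beta> q0 q1 q2 u \<longleftrightarrow> (\<forall>x t.
     dt u x t =
       p1 * deriv (\<lambda>y. (u y t)\<^sup>2) x
     + p3 * deriv (\<lambda>y. u y t * dx u 2 y t + \<beta> * (dx u 1 y t)\<^sup>2) x
     + q0 * u x t * dx u 5 x t + q1 * dx u 1 x t * dx u 4 x t
     + q2 * dx u 2 x t * dx u 3 x t)"

definition rapid_decay :: "(real \<Rightarrow> real \<Rightarrow> real) \<Rightarrow> bool" where
  "rapid_decay u \<longleftrightarrow> (\<forall>k n a b. \<exists>C. \<forall>x t. a \<le> t \<and> t \<le> b \<longrightarrow>
      \<bar>x\<bar> ^ n * \<bar>dx u k x t\<bar> \<le> C)"

end

theory Submission
  imports Defs "HOL-Probability.Sinc_Integral"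
begin

lemma smooth2_cont: "smooth2 f \<Longrightarrow> continuous_on UNIV (\<lambda>z. f (fst z) (snd z))"
  by (erule smooth2.cases) auto
lemma smooth2_xdiff: "smooth2 f \<Longrightarrow> (\<lambda>y. f y t) differentiable (at x)"
  by (erule smooth2.cases) auto
lemma smooth2_tdiff: "smooth2 f \<Longrightarrow> (\<lambda>s. f x s) differentiable (at t)"
  by (erule smooth2.cases) auto
lemma smooth2_xsm: "smooth2 f \<Longrightarrow> smooth2 (\<lambda>x t. deriv (\<lambda>y. f y t) x)"
  by (erule smooth2.cases) auto
lemma smooth2_tsm: "smooth2 f \<Longrightarrow> smooth2 (\<lambda>x t. deriv (\<lambda>s. f x s) t)"
  by (erule smooth2.cases) auto

lemma dx_0[simp]: "dx u 0 x t = u x t"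
  by (simp add: dx_def)
lemma dx_Suc: "dx u (Suc k) x t = deriv (\<lambda>y. dx u k y t) x"
  by (simp add: dx_def)

lemma smooth_dx: "smooth2 u \<Longrightarrow> smooth2 (\<lambda>x t. dx u k x t)"
proof (induction k)
  case 0
  then show ?case by (simp add: dx_def)
next
  case (Suc k)
  then show ?case using smooth2_xsm[OF Suc.IH[OF Suc.prems]] by (simp add: dx_Suc)
qed

lemma deriv_dx: "smooth2 u \<Longrightarrow> ((\<lambda>y. dx u k y t) has_real_derivative dx u (Suc k) x t) (at x)"
  using smooth2_xdiff[OF smooth_dx, of u k t x]
  by (simp add: dx_Suc DERIV_deriv_iff_real_differentiable)

lemma deriv_t: "smooth2 u \<Longrightarrow> ((\<lambda>s. u x s) has_real_derivative dt u x t) (at t)"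
  using smooth2_tdiff[of u x t]
  by (simp add: dt_def DERIV_deriv_iff_real_differentiable)

lemma dt_smooth: "smooth2 u \<Longrightarrow> smooth2 (dt u)"
  using smooth2_tsm[of u] by (simp add: dt_def[abs_def])


definition mon5 where
  "mon5 c v0 v1 v2 v3 v4 = (\<lambda>(a0::nat, a1::nat, a2::nat, a3::nat, a4::nat).
      c (a0, a1, a2, a3, a4) * v0 ^ a0 * v1 ^ a1 * v2 ^ a2 * v3 ^ a3 * (v4::real) ^ a4)"

lemma mon5_zero: "c m = 0 \<Longrightarrow> mon5 c v0 v1 v2 v3 v4 m = 0"
  by (cases m) (auto simp: mon5_def)

lemma poly5_iff: "poly5 F \<longleftrightarrow> (\<exists>c. finite {m. c m \<noteq> 0} \<and>
   (\<forall>v0 v1 v2 v3 v4. F v0 v1 v2 v3 v4 = sum (mon5 c v0 v1 v2 v3 v4) {m. c m \<noteq> 0}))"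
  unfolding poly5_def mon5_def by simp

lemma sum_mon5_super: "finite T \<Longrightarrow> {m. c m \<noteq> 0} \<subseteq> T \<Longrightarrow>
   sum (mon5 c v0 v1 v2 v3 v4) {m. c m \<noteq> 0} = sum (mon5 c v0 v1 v2 v3 v4) T"
  by (rule sum.mono_neutral_left) (auto intro: mon5_zero)

lemma mon5_add: "mon5 (\<lambda>m. c1 m + c2 m) v0 v1 v2 v3 v4 m = mon5 c1 v0 v1 v2 v3 v4 m + mon5 c2 v0 v1 v2 v3 v4 m"
  by (cases m) (auto simp: mon5_def algebra_simps)

lemma poly5_add:
  assumes "poly5 F" "poly5 G"
  shows "poly5 (\<lambda>v0 v1 v2 v3 v4. F v0 v1 v2 v3 v4 + G v0 v1 v2 v3 v4)"
proof -
  obtain c1 where c1: "finite {m. c1 m \<noteq> 0}" "\<And>v0 v1 v2 v3 v4. F v0 v1 v2 v3 v4 = sum (mon5 c1 v0 v1 v2 v3 v4) {m. c1 m \<noteq> 0}"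
    using assms(1) unfolding poly5_iff by blast
  obtain c2 where c2: "finite {m. c2 m \<noteq> 0}" "\<And>v0 v1 v2 v3 v4. G v0 v1 v2 v3 v4 = sum (mon5 c2 v0 v1 v2 v3 v4) {m. c2 m \<noteq> 0}"
    using assms(2) unfolding poly5_iff by blast
  define T where "T = {m. c1 m \<noteq> 0} \<union> {m. c2 m \<noteq> 0}"
  have T: "finite T" using c1 c2 by (simp add: T_def)
  let ?c = "\<lambda>m. c1 m + c2 m"
  have sub: "{m. ?c m \<noteq> 0} \<subseteq> T" by (auto simp: T_def)
  show ?thesis unfolding poly5_iff
  proof (intro exI conjI allI)
    show "finite {m. ?c m \<noteq> 0}" using T sub finite_subset by blast
    fix v0 v1 v2 v3 v4
    have "sum (mon5 ?c v0 v1 v2 v3 v4) {m. ?c m \<noteq> 0} = sum (mon5 ?c v0 v1 v2 v3 v4) T"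
      by (rule sum_mon5_super[OF T sub])
    also have "\<dots> = sum (mon5 c1 v0 v1 v2 v3 v4) T + sum (mon5 c2 v0 v1 v2 v3 v4) T"
      by (simp add: mon5_add sum.distrib)
    also have "\<dots> = F v0 v1 v2 v3 v4 + G v0 v1 v2 v3 v4"
      using sum_mon5_super[OF T, of c1] sum_mon5_super[OF T, of c2] c1 c2
      by (simp add: T_def)
    finally show "F v0 v1 v2 v3 v4 + G v0 v1 v2 v3 v4 = sum (mon5 ?c v0 v1 v2 v3 v4) {m. ?c m \<noteq> 0}" by simp
  qed
qed

lemma poly5_mon: "poly5 (\<lambda>v0 v1 v2 v3 v4. a * v0 ^ a0 * v1 ^ a1 * v2 ^ a2 * v3 ^ a3 * v4 ^ a4)"
proof (cases "a = 0")
  case True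
  then show ?thesis unfolding poly5_def by (intro exI[of _ "\<lambda>_. 0"]) simp
next
  case False
  let ?c = "\<lambda>m. if m = (a0, a1, a2, a3, a4) then a else 0"
  have "{m. ?c m \<noteq> 0} = {(a0, a1, a2, a3, a4)}" using False by auto
  then show ?thesis unfolding poly5_def by (intro exI[of _ ?c]) auto
qed

definition Fp :: "real \<Rightarrow> real \<Rightarrow> real \<Rightarrow> real \<Rightarrow> real \<Rightarrow> real \<Rightarrow> real \<Rightarrow> real \<Rightarrow> real \<Rightarrow> real" where
  "Fp p1 p3 q0 q1 v0 v1 v2 v3 v4 =
      (3/2 * p1) * v0^4 * v1^0 * v2^0 * v3^0 * v4^0
    + (3 * p3) * v0^3 * v1^0 * v2^1 * v3^0 * v4^0
    + (3 * q0) * v0^3 * v1^0 * v2^0 * v3^0 * v4^1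
    + (3*q1 - 9*q0) * v0^2 * v1^1 * v2^0 * v3^1 * v4^0
    + (6*q1 - 18*q0) * v0^2 * v1^0 * v2^2 * v3^0 * v4^0
    + (18*q0 - 6*q1) * v0^1 * v1^2 * v2^1 * v3^0 * v4^0
    + (3/2*q1 - 9/2*q0) * v0^0 * v1^4 * v2^0 * v3^0 * v4^0"

lemma poly5_Fp: "poly5 (Fp p1 p3 q0 q1)"
  unfolding Fp_def[abs_def]
  by (intro poly5_add poly5_mon)


lemma dx_deriv_eq: "smooth2 u \<Longrightarrow> deriv (\<lambda>y. dx u k y t) x = dx u (Suc k) x t"
  using deriv_dx DERIV_imp_deriv by blast

lemma dt_expr:
  assumes sm: "smooth2 u" and sol: "solves_eq p1 p3 \<beta> q0 q1 q2 u"
  shows "dt u x t = p1 * (2 * dx u 0 x t * dx u 1 x t)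
     + p3 * (dx u 1 x t * dx u 2 x t + dx u 0 x t * dx u 3 x t + \<beta> * (2 * dx u 1 x t * dx u 2 x t))
     + q0 * dx u 0 x t * dx u 5 x t + q1 * dx u 1 x t * dx u 4 x t
     + q2 * dx u 2 x t * dx u 3 x t"
proof -
  note d = deriv_dx[OF sm]
  have d0: "((\<lambda>y. u y t) has_real_derivative dx u 1 x t) (at x)" for x
    using d[of 0 t x] by simp
  have e1: "deriv (\<lambda>y. (u y t)\<^sup>2) x = 2 * dx u 0 x t * dx u 1 x t"
    by (rule DERIV_imp_deriv) (auto intro!: derivative_eq_intros d0)
  have e2: "deriv (\<lambda>y. u y t * dx u 2 y t + \<beta> * (dx u 1 y t)\<^sup>2) x =
     dx u 1 x t * dx u 2 x t + dx u 0 x t * dx u 3 x t + \<beta> * (2 * dx u 1 x t * dx u 2 x t)"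
    by (rule DERIV_imp_deriv) (auto intro!: derivative_eq_intros d0 d simp: numeral_eq_Suc algebra_simps)
  show ?thesis using sol e1 e2 unfolding solves_eq_def by simp
qed

lemma key_deriv:
  assumes sm: "smooth2 u" and sol: "solves_eq p1 p3 \<beta> q0 q1 q2 u"
    and h: "p3 = 0 \<or> \<beta> = 1" and q2: "q2 = 5 * (q1 - 3 * q0)"
  shows "((\<lambda>y. Fp p1 p3 q0 q1 (u y t) (dx u 1 y t) (dx u 2 y t) (dx u 3 y t) (dx u 4 y t))
     has_real_derivative 3 * (u x t)^2 * dt u x t) (at x)"
proof -
  note d = deriv_dx[OF sm]
  have d0: "((\<lambda>y. u y t) has_real_derivative dx u 1 x t) (at x)" for x
    using d[of 0 t x] by simp
  have hb: "p3 * \<beta> = p3" using h by auto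
  show ?thesis
    unfolding dt_expr[OF sm sol] Fp_def
    apply (rule derivative_eq_intros d0 d | simp)+
    using h apply (elim disjE)
     apply (simp_all add: q2 algebra_simps power2_eq_square power3_eq_cube numeral_2_eq_2[symmetric])
    done
qed


lemma abs3: "\<bar>x\<bar> \<le> M \<Longrightarrow> \<bar>y\<bar> \<le> M \<Longrightarrow> \<bar>z\<bar> \<le> M \<Longrightarrow> \<bar>x*y*z\<bar> \<le> (M::real)^3"
proof -
  assume a: "\<bar>x\<bar> \<le> M" "\<bar>y\<bar> \<le> M" "\<bar>z\<bar> \<le> M"
  have "\<bar>x*y*z\<bar> = \<bar>x\<bar>*\<bar>y\<bar>*\<bar>z\<bar>" by (simp add: abs_mult)
  also have "\<dots> \<le> M*M*M" using a by (intro mult_mono) auto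
  finally show ?thesis by (simp add: power3_eq_cube)
qed

lemma term_bound: "\<bar>P\<bar> \<le> (M::real)^3 \<Longrightarrow> -(\<bar>c\<bar>*M^3*\<bar>w\<bar>) \<le> c*w*P \<and> c*w*P \<le> \<bar>c\<bar>*M^3*\<bar>w\<bar>"
proof -
  assume a: "\<bar>P\<bar> \<le> M^3"
  have "\<bar>c*w*P\<bar> = \<bar>c\<bar>*\<bar>w\<bar>*\<bar>P\<bar>" by (simp add: abs_mult)
  also have "\<dots> \<le> \<bar>c\<bar>*\<bar>w\<bar>*M^3" using a by (intro mult_left_mono) auto
  finally show ?thesis by (simp add: abs_le_iff algebra_simps)
qed

lemma sum7: "-b1 \<le> a1 \<and> a1 \<le> b1 \<Longrightarrow> -b2 \<le> a2 \<and> a2 \<le> b2 \<Longrightarrow> -b3 \<le> a3 \<and> a3 \<le> b3 \<Longrightarrow>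
  -b4 \<le> a4 \<and> a4 \<le> b4 \<Longrightarrow> -b5 \<le> a5 \<and> a5 \<le> b5 \<Longrightarrow> -b6 \<le> a6 \<and> a6 \<le> b6 \<Longrightarrow>
  -b7 \<le> a7 \<and> a7 \<le> b7 \<Longrightarrow> 0 \<le> e1 \<Longrightarrow> 0 \<le> e2 \<Longrightarrow> K = b1+b2+b3+b4+b5+b6+b7+e1+e2 \<Longrightarrow>
  \<bar>a1+a2+a3+a4+a5+a6+a7\<bar> \<le> (K::real)"
  by (simp add: abs_le_iff)

definition KF where "KF p1 p3 q0 q1 M = (\<bar>3/2*p1\<bar> + \<bar>3*p3\<bar> + \<bar>3*q0\<bar> + \<bar>3*q1 - 9*q0\<bar>
   + \<bar>6*q1 - 18*q0\<bar> + \<bar>18*q0 - 6*q1\<bar> + \<bar>3/2*q1 - 9/2*q0\<bar>) * M^3"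

lemma Fp_bound:
  assumes "\<bar>v0\<bar> \<le> M" "\<bar>v1\<bar> \<le> M" "\<bar>v2\<bar> \<le> M" "\<bar>v3\<bar> \<le> M" "\<bar>v4\<bar> \<le> M"
  shows "\<bar>Fp p1 p3 q0 q1 v0 v1 v2 v3 v4\<bar> \<le> KF p1 p3 q0 q1 M * (\<bar>v0\<bar> + \<bar>v1\<bar>)"
proof -
  have eq: "Fp p1 p3 q0 q1 v0 v1 v2 v3 v4 =
      (3/2*p1) * v0 * (v0* v0* v0) + (3*p3) * v0 * (v0* v0* v2) + (3*q0) * v0 * (v0* v0* v4)
    + (3*q1 - 9*q0) * v0 * (v0* v1* v3) + (6*q1 - 18*q0) * v0 * (v0* v2* v2)
    + (18*q0 - 6*q1) * v0 * (v1* v1* v2) + (3/2*q1 - 9/2*q0) * v1 * (v1* v1* v1)"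
    by (simp add: Fp_def power2_eq_square power3_eq_cube power4_eq_xxxx algebra_simps)
  note b = term_bound[OF abs3[OF assms(1) assms(1) assms(1)], of "3/2*p1" v0]
    term_bound[OF abs3[OF assms(1) assms(1) assms(3)], of "3*p3" v0]
    term_bound[OF abs3[OF assms(1) assms(1) assms(5)], of "3*q0" v0]
    term_bound[OF abs3[OF assms(1) assms(2) assms(4)], of "3*q1 - 9*q0" v0]
    term_bound[OF abs3[OF assms(1) assms(3) assms(3)], of "6*q1 - 18*q0" v0]
    term_bound[OF abs3[OF assms(2) assms(2) assms(3)], of "18*q0 - 6*q1" v0]
    term_bound[OF abs3[OF assms(2) assms(2) assms(2)], of "3/2*q1 - 9/2*q0" v1]
  have M3: "0 \<le> M^3" using assms(1) by simp
  have nn: "0 \<le> \<bar>c\<bar> * M^3 * \<bar>v1\<bar>" "0 \<le> \<bar>c\<bar> * M^3 * \<bar>v0\<bar>" for c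
    using assms(1) by auto
  have keq: "KF p1 p3 q0 q1 M * (\<bar>v0\<bar> + \<bar>v1\<bar>) =
     \<bar>3/2*p1\<bar>*M^3*\<bar>v0\<bar> + \<bar>3*p3\<bar>*M^3*\<bar>v0\<bar> + \<bar>3*q0\<bar>*M^3*\<bar>v0\<bar> + \<bar>3*q1 - 9*q0\<bar>*M^3*\<bar>v0\<bar>
   + \<bar>6*q1 - 18*q0\<bar>*M^3*\<bar>v0\<bar> + \<bar>18*q0 - 6*q1\<bar>*M^3*\<bar>v0\<bar> + \<bar>3/2*q1 - 9/2*q0\<bar>*M^3*\<bar>v1\<bar>
   + (\<bar>3/2*p1\<bar> + \<bar>3*p3\<bar> + \<bar>3*q0\<bar> + \<bar>3*q1 - 9*q0\<bar>
   + \<bar>6*q1 - 18*q0\<bar> + \<bar>18*q0 - 6*q1\<bar>)*M^3*\<bar>v1\<bar> + \<bar>3/2*q1 - 9/2*q0\<bar>*M^3*\<bar>v0\<bar>"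
    by (simp add: KF_def algebra_simps)
  have e1: "0 \<le> (\<bar>3/2*p1\<bar> + \<bar>3*p3\<bar> + \<bar>3*q0\<bar> + \<bar>3*q1 - 9*q0\<bar>
   + \<bar>6*q1 - 18*q0\<bar> + \<bar>18*q0 - 6*q1\<bar>)*M^3*\<bar>v1\<bar>" and e2: "0 \<le> \<bar>3/2*q1 - 9/2*q0\<bar>*M^3*\<bar>v0\<bar>"
    using M3 by (intro mult_nonneg_nonneg add_nonneg_nonneg abs_ge_zero; simp)+
  show ?thesis unfolding eq by (rule sum7[OF b e1 e2 keq])
qed


lemma cube_limit:
  fixes g :: "real \<Rightarrow> real"
  assumes cont: "continuous_on UNIV g" and bnd: "\<And>x. \<bar>g x\<bar> \<le> K * inverse (1 + x^2)"
  shows "(\<lambda>n. integral {-real (Suc n)..real (Suc n)} g) \<longlonglongrightarrow> (LBINT x. g x)"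
proof -
  have int1: "integrable lborel (\<lambda>x::real. inverse (1+x^2))"
    using integrable_inverse_1_plus_square by (simp add: set_integrable_def)
  have gm: "g \<in> borel_measurable lborel"
    using borel_measurable_continuous_onI[OF cont] by simp
  have intg: "integrable lborel g"
  proof (rule Bochner_Integration.integrable_bound[OF integrable_mult_right[OF int1, of K] gm])
    show "AE x in lborel. norm (g x) \<le> norm (K * inverse (1 + x\<^sup>2))"
      using bnd by (auto intro: order_trans[OF _ abs_ge_self])
  qed
  have eq: "integral {-real (Suc n)..real (Suc n)} g =
     (LBINT x. indicator {-real (Suc n)..real (Suc n)} x *\<^sub>R g x)" for n
  proof -
    have "set_integrable lborel {-real (Suc n)..real (Suc n)} g"
      unfolding set_integrable_def by (rule integrable_mult_indicator) (auto intro: intg)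
    from set_borel_integral_eq_integral(2)[OF this] show ?thesis
      by (simp add: set_lebesgue_integral_def)
  qed
  show ?thesis unfolding eq
  proof (rule integral_dominated_convergence[where w = "\<lambda>x. \<bar>g x\<bar>"])
    show "g \<in> borel_measurable lborel" by (rule gm)
    show "(\<lambda>x. indicator {-real (Suc n)..real (Suc n)} x *\<^sub>R g x) \<in> borel_measurable lborel" for n
      using gm by measurable
    show "integrable lborel (\<lambda>x. \<bar>g x\<bar>)" using intg by (rule integrable_abs)
    show "AE x in lborel. (\<lambda>n. indicator {-real (Suc n)..real (Suc n)} x *\<^sub>R g x) \<longlonglongrightarrow> g x"
    proof (rule AE_I2)
      fix x :: real
      obtain N where N: "\<bar>x\<bar> \<le> real N" using real_arch_simple by blast
      have "\<forall>\<^sub>F n in sequentially. indicator {-real (Suc n)..real (Suc n)} x *\<^sub>R g x = g x"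
        unfolding eventually_sequentially
        by (rule exI[of _ N]) (use N in \<open>auto simp: indicator_def abs_le_iff\<close>)
      then show "(\<lambda>n. indicator {-real (Suc n)..real (Suc n)} x *\<^sub>R g x) \<longlonglongrightarrow> g x"
        by (rule tendsto_eventually)
    qed
    show "AE x in lborel. norm (indicator {-real (Suc n)..real (Suc n)} x *\<^sub>R g x) \<le> \<bar>g x\<bar>" for n
      by (auto simp: indicator_def)
  qed
qed


lemma cube_bound:
  fixes v x :: real
  assumes "\<bar>v\<bar> \<le> A" "x^2 * \<bar>v\<bar> \<le> B"
  shows "\<bar>v^3\<bar> \<le> A^2 * (A + B) * inverse (1 + x^2)"
proof -
  have p: "0 < 1 + x^2" by (simp add: add_pos_nonneg)
  have "\<bar>v\<bar> * (1 + x^2) \<le> A + B" using assms by (simp add: algebra_simps)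
  then have v: "\<bar>v\<bar> \<le> (A + B) * inverse (1 + x^2)" using p
    by (simp add: field_simps)
  have "\<bar>v^3\<bar> = \<bar>v\<bar>^2 * \<bar>v\<bar>" by (simp add: power3_eq_cube power2_eq_square abs_mult)
  also have "\<dots> \<le> A^2 * ((A + B) * inverse (1 + x^2))"
    using v assms(1) by (intro mult_mono power_mono) auto
  finally show ?thesis by (simp add: mult.assoc)
qed

lemma decay_one:
  fixes R v D :: real
  assumes "\<bar>R\<bar> * \<bar>v\<bar> \<le> D" "0 < \<bar>R\<bar>"
  shows "\<bar>v\<bar> \<le> D * inverse \<bar>R\<bar>"
  using assms by (simp add: field_simps mult.commute)

lemma conserv:
  assumes sm: "smooth2 u" and sol: "solves_eq p1 p3 \<beta> q0 q1 q2 u"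
    and h: "p3 = 0 \<or> \<beta> = 1" and q2: "q2 = 5 * (q1 - 3 * q0)"
    and rd: "rapid_decay u" and lt: "t1 < t2"
  shows "(LBINT x. (u x t1)^3) = (LBINT x. (u x t2)^3)"
proof -
  define \<Phi> where "\<Phi> y s = Fp p1 p3 q0 q1 (u y s) (dx u 1 y s) (dx u 2 y s) (dx u 3 y s) (dx u 4 y s)" for y s
  define E where "E y s = 3 * (u y s)^2 * dt u y s" for y s
  have d\<Phi>: "((\<lambda>y. \<Phi> y s) has_real_derivative E y s) (at y)" for y s
    unfolding \<Phi>_def E_def by (rule key_deriv[OF sm sol h q2])
  have dU: "((\<lambda>s. (u y s)^3) has_real_derivative E y s) (at s)" for y s
    unfolding E_def by (auto intro!: derivative_eq_intros deriv_t[OF sm])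
  have cu: "continuous_on UNIV (\<lambda>z. u (fst z) (snd z))" by (rule smooth2_cont[OF sm])
  have cdt: "continuous_on UNIV (\<lambda>z. dt u (fst z) (snd z))" by (rule smooth2_cont[OF dt_smooth[OF sm]])
  have cE0: "continuous_on UNIV (\<lambda>z. 3 * (u (fst z) (snd z))^2 * dt u (fst z) (snd z))"
    using cu cdt by (intro continuous_intros)
  have cE1: "continuous_on UNIV (\<lambda>z. 3 * (u (fst (prod.swap z)) (snd (prod.swap z)))^2 * dt u (fst (prod.swap z)) (snd (prod.swap z)))"
    by (rule continuous_on_compose2[OF cE0 continuous_on_swap]) auto
  have cE: "continuous_on UNIV (\<lambda>(s, y). E y s)"
    using cE1 by (simp add: E_def split_beta)
  have cux: "continuous_on UNIV (\<lambda>y. (u y s)^3)" for s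
  proof -
    have "isCont (\<lambda>y. u y s) y" for y
      using DERIV_isCont[OF deriv_dx[OF sm, of 0 s y]] by simp
    then have "continuous_on UNIV (\<lambda>y. u y s)" by (simp add: continuous_at_imp_continuous_on)
    then show ?thesis by (intro continuous_intros)
  qed
  have dH: "((\<lambda>s. integral {-R..R} (\<lambda>y. (u y s)^3)) has_real_derivative (\<Phi> R s - \<Phi> (-R) s)) (at s)"
    if R: "0 \<le> R" for R s
  proof -
    have 1: "((\<lambda>s. integral (cbox (-R) R) (\<lambda>y. (u y s)^3)) has_field_derivative
        integral (cbox (-R) R) (\<lambda>y. E y s)) (at s within UNIV)"
    proof (rule leibniz_rule_field_derivative[where f = "\<lambda>s y. (u y s)^3" and fx = "\<lambda>s y. E y s"])
      show "((\<lambda>s. (u y s)^3) has_field_derivative E y s) (at s within UNIV)" for s y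
        using dU by simp
      show "(\<lambda>y. (u y s)^3) integrable_on cbox (-R) R" for s
        by (rule integrable_continuous) (rule continuous_on_subset[OF cux], simp)
      show "continuous_on (UNIV \<times> cbox (-R) R) (\<lambda>(s, y). E y s)"
        by (rule continuous_on_subset[OF cE]) simp
    qed auto
    have 2: "((\<lambda>y. E y s) has_integral (\<Phi> R s - \<Phi> (-R) s)) {-R..R}"
    proof (rule fundamental_theorem_of_calculus)
      show "-R \<le> R" using R by simp
      show "((\<lambda>y. \<Phi> y s) has_vector_derivative E y s) (at y within {-R..R})" for y
        by (rule has_vector_derivative_at_within) (use d\<Phi>[of s y] in \<open>simp add: has_real_derivative_iff_has_vector_derivative\<close>)
    qed
    have 3: "cbox (-R) R = {-R..R}" by (rule box_real(2))
    show ?thesis using 1 unfolding 3 integral_unique[OF 2] by simp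
  qed
  have bd0: "\<exists>C. \<forall>x t. t1 \<le> t \<and> t \<le> t2 \<longrightarrow> \<bar>dx u k x t\<bar> \<le> C" for k
    using rd[unfolded rapid_decay_def, rule_format, where k=k and n=0 and a=t1 and b=t2] by simp
  then obtain C where C: "\<And>k x t. t1 \<le> t \<Longrightarrow> t \<le> t2 \<Longrightarrow> \<bar>dx u k x t\<bar> \<le> C k" by metis
  have bd1: "\<exists>C. \<forall>x t. t1 \<le> t \<and> t \<le> t2 \<longrightarrow> \<bar>x\<bar> * \<bar>dx u k x t\<bar> \<le> C" for k
    using rd[unfolded rapid_decay_def, rule_format, where k=k and n=1 and a=t1 and b=t2] by simp
  then obtain D where D: "\<And>k x t. t1 \<le> t \<Longrightarrow> t \<le> t2 \<Longrightarrow> \<bar>x\<bar> * \<bar>dx u k x t\<bar> \<le> D k" by metis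
  define M where "M = \<bar>C 0\<bar> + \<bar>C 1\<bar> + \<bar>C 2\<bar> + \<bar>C 3\<bar> + \<bar>C 4\<bar>"
  define B where "B = \<bar>D 0\<bar> + \<bar>D 1\<bar>"
  define K where "K = KF p1 p3 q0 q1 M"
  have M0: "0 \<le> M" by (simp add: M_def)
  have K0: "0 \<le> K" unfolding K_def KF_def using M0 by (intro mult_nonneg_nonneg add_nonneg_nonneg abs_ge_zero; simp)+
  have \<Phi>bd: "\<bar>\<Phi> y s\<bar> \<le> K * (2 * B) * inverse \<bar>y\<bar>" if s: "t1 \<le> s" "s \<le> t2" and y: "0 < \<bar>y\<bar>" for y s
  proof -
    have Mb: "\<bar>dx u k y s\<bar> \<le> M" if "k \<le> 4" for k
    proof -
      have "k = 0 \<or> k = 1 \<or> k = 2 \<or> k = 3 \<or> k = 4" using that by auto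
      then show ?thesis using C[OF s, of k y] unfolding M_def by auto
    qed
    have u0: "\<bar>u y s\<bar> \<le> B * inverse \<bar>y\<bar>"
    proof -
      have "\<bar>u y s\<bar> \<le> D 0 * inverse \<bar>y\<bar>" using decay_one[OF _ y] D[OF s, of y 0] by simp
      also have "\<dots> \<le> B * inverse \<bar>y\<bar>" using y unfolding B_def by (intro mult_right_mono) auto
      finally show ?thesis .
    qed
    have u1: "\<bar>dx u 1 y s\<bar> \<le> B * inverse \<bar>y\<bar>"
    proof -
      have "\<bar>dx u 1 y s\<bar> \<le> D 1 * inverse \<bar>y\<bar>" using decay_one[OF _ y] D[OF s, of y 1] by simp
      also have "\<dots> \<le> B * inverse \<bar>y\<bar>" using y unfolding B_def by (intro mult_right_mono) auto
      finally show ?thesis .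
    qed
    have "\<bar>\<Phi> y s\<bar> \<le> K * (\<bar>u y s\<bar> + \<bar>dx u 1 y s\<bar>)"
      unfolding \<Phi>_def K_def using Mb[of 0] Mb[of 1] Mb[of 2] Mb[of 3] Mb[of 4]
      by (intro Fp_bound) auto
    also have "\<dots> \<le> K * (B * inverse \<bar>y\<bar> + B * inverse \<bar>y\<bar>)"
      using u0 u1 K0 by (intro mult_left_mono) auto
    finally show ?thesis by (simp add: algebra_simps)
  qed
  define H where "H n s = integral {-real (Suc n)..real (Suc n)} (\<lambda>y. (u y s)^3)" for n s
  have Hbd: "\<bar>H n t2 - H n t1\<bar> \<le> (t2 - t1) * (2 * (K * (2 * B))) * inverse (real (Suc n))" for n
  proof -
    let ?R = "real (Suc n)"
    have "\<exists>z. t1 < z \<and> z < t2 \<and> H n t2 - H n t1 = (t2 - t1) * (\<Phi> ?R z - \<Phi> (-?R) z)"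
      unfolding H_def by (rule MVT2[OF lt dH]) simp
    then obtain z where z: "t1 < z" "z < t2" "H n t2 - H n t1 = (t2 - t1) * (\<Phi> ?R z - \<Phi> (-?R) z)"
      by blast
    have a: "\<bar>\<Phi> ?R z\<bar> \<le> K * (2 * B) * inverse ?R" using \<Phi>bd[of z ?R] z by (simp add: add.commute)
    have b: "\<bar>\<Phi> (-?R) z\<bar> \<le> K * (2 * B) * inverse ?R" using \<Phi>bd[of z "-?R"] z by (simp add: add.commute)
    have "\<bar>\<Phi> ?R z - \<Phi> (-?R) z\<bar> \<le> 2 * (K * (2 * B)) * inverse ?R" using a b by linarith
    then have "(t2 - t1) * \<bar>\<Phi> ?R z - \<Phi> (-?R) z\<bar> \<le> (t2 - t1) * (2 * (K * (2 * B)) * inverse ?R)"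
      using lt by (intro mult_left_mono) auto
    then show ?thesis using z lt by (simp add: abs_mult mult.assoc)
  qed
  have lim0: "(\<lambda>n. H n t2 - H n t1) \<longlonglongrightarrow> 0"
  proof -
    have t: "(\<lambda>n. (t2 - t1) * (2 * (K * (2 * B))) * inverse (real (Suc n))) \<longlonglongrightarrow> 0"
      using tendsto_mult_right_zero[OF LIMSEQ_inverse_real_of_nat] by simp
    show ?thesis
      by (rule Lim_null_comparison[OF _ t]) (use Hbd in \<open>auto intro: always_eventually\<close>)
  qed
  have limt: "(\<lambda>n. H n t) \<longlonglongrightarrow> (LBINT x. (u x t)^3)" for t
  proof -
    obtain A where A0: "\<forall>x ta. t \<le> ta \<and> ta \<le> t \<longrightarrow> \<bar>x\<bar>^0 * \<bar>dx u 0 x ta\<bar> \<le> A"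
      using rd[unfolded rapid_decay_def, rule_format, where k=0 and n=0 and a=t and b=t] by blast
    have A: "\<bar>dx u 0 x t\<bar> \<le> A" for x using A0[rule_format, where x=x and ta=t] by simp
    obtain A2 where A20: "\<forall>x ta. t \<le> ta \<and> ta \<le> t \<longrightarrow> \<bar>x\<bar>^2 * \<bar>dx u 0 x ta\<bar> \<le> A2"
      using rd[unfolded rapid_decay_def, rule_format, where k=0 and n=2 and a=t and b=t] by blast
    have A2: "\<bar>x\<bar>^2 * \<bar>dx u 0 x t\<bar> \<le> A2" for x using A20[rule_format, where x=x and ta=t] by simp
    show ?thesis unfolding H_def
    proof (rule cube_limit[OF cux])
      show "\<bar>(u x t)^3\<bar> \<le> A^2 * (A + A2) * inverse (1 + x^2)" for x
        using A[of x] A2[of x] by (intro cube_bound) auto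
    qed
  qed
  have "(\<lambda>n. H n t2 - H n t1) \<longlonglongrightarrow> (LBINT x. (u x t2)^3) - (LBINT x. (u x t1)^3)"
    by (intro tendsto_diff limt)
  from LIMSEQ_unique[OF this lim0] show ?thesis by simp
qed


theorem mainTheorem10:
  fixes p1 p3 \<beta> q0 q1 q2 :: real
  assumes "p3 = 0 \<or> \<beta> = 1"
    and "q2 = 5 * (q1 - 3 * q0)"
  shows "(\<exists>F. poly5 F \<and>
           (\<forall>u. smooth2 u \<and> solves_eq p1 p3 \<beta> q0 q1 q2 u \<longrightarrow>
              (\<forall>x t. dt (\<lambda>y s. (u y s) ^ 3) x t =
                 deriv (\<lambda>y. F (u y t) (dx u 1 y t) (dx u 2 y t) (dx u 3 y t) (dx u 4 y t)) x)))
       \<and> (\<forall>u. smooth2 u \<and> solves_eq p1 p3 \<beta> q0 q1 q2 u \<and> rapid_decay u \<longrightarrow>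
              (\<forall>t1 t2. (LBINT x. (u x t1) ^ 3) = (LBINT x. (u x t2) ^ 3)))"
proof (intro conjI)
  show "\<exists>F. poly5 F \<and>
           (\<forall>u. smooth2 u \<and> solves_eq p1 p3 \<beta> q0 q1 q2 u \<longrightarrow>
              (\<forall>x t. dt (\<lambda>y s. (u y s) ^ 3) x t =
                 deriv (\<lambda>y. F (u y t) (dx u 1 y t) (dx u 2 y t) (dx u 3 y t) (dx u 4 y t)) x))"
  proof (intro exI[of _ "Fp p1 p3 q0 q1"] conjI poly5_Fp allI impI)
    fix u x t
    assume a: "smooth2 u \<and> solves_eq p1 p3 \<beta> q0 q1 q2 u"
    have l: "dt (\<lambda>y s. (u y s) ^ 3) x t = 3 * (u x t)^2 * dt u x t"
      unfolding dt_def[of "\<lambda>y s. (u y s) ^ 3"]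
      by (rule DERIV_imp_deriv) (auto intro!: derivative_eq_intros deriv_t[OF a[THEN conjunct1]])
    have r: "deriv (\<lambda>y. Fp p1 p3 q0 q1 (u y t) (dx u 1 y t) (dx u 2 y t) (dx u 3 y t) (dx u 4 y t)) x
       = 3 * (u x t)^2 * dt u x t"
      by (rule DERIV_imp_deriv) (rule key_deriv[OF a[THEN conjunct1] a[THEN conjunct2] assms])
    show "dt (\<lambda>y s. (u y s) ^ 3) x t =
       deriv (\<lambda>y. Fp p1 p3 q0 q1 (u y t) (dx u 1 y t) (dx u 2 y t) (dx u 3 y t) (dx u 4 y t)) x"
      by (simp only: l r)
  qed
  show "\<forall>u. smooth2 u \<and> solves_eq p1 p3 \<beta> q0 q1 q2 u \<and> rapid_decay u \<longrightarrow>
              (\<forall>t1 t2. (LBINT x. (u x t1) ^ 3) = (LBINT x. (u x t2) ^ 3))"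
  proof (intro allI impI)
    fix u t1 t2
    assume a: "smooth2 u \<and> solves_eq p1 p3 \<beta> q0 q1 q2 u \<and> rapid_decay u"
    then have sm: "smooth2 u" and sol: "solves_eq p1 p3 \<beta> q0 q1 q2 u" and rd: "rapid_decay u" by auto
    have c: "t1 < t2 \<Longrightarrow> (LBINT x. (u x t1) ^ 3) = (LBINT x. (u x t2) ^ 3)" for t1 t2
      by (rule conserv[OF sm sol assms rd])
    show "(LBINT x. (u x t1) ^ 3) = (LBINT x. (u x t2) ^ 3)"
    proof (cases t1 t2 rule: linorder_cases)
      case less then show ?thesis by (rule c)
    next
      case equal then show ?thesis by (simp only:)
    next
      case greater show ?thesis using c[OF greater] by (rule sym)
    qed
  qed
qed

end
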